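(* Let $m\ge 2$. The bulk checks together with the horizontal and vertical boundary checks defined in the context, viewed as indicator vectors in $\mathbb{F}_2^{2^m}$, are linearly independent over $\mathbb{F}_2$ and are exactly $2^m-m-1$ in number. Consequently the code $uRM(m)$ they define has length $2^m$ and dimension $m+1$.
   Context: Let $a=\lceil m/2\rceil$ and $b=\lfloor m/2\rfloor$. Place $2^m$ bits on a grid with $2^b$ rows and $2^a$ columns, positions $(i,j)$, row $1$ on top, column $1$ leftmost. Bulk checks: for every $1\le i<2^b$, $1\le j<2^a$, the set $\{(i,j),(i+1,j),(i,j+1),(i+1,j+1)\}$. Boundary checks: for a line of $L=2^n$ positions labelled $1,\dots,L$, each $s\in\{1,\dots,n-1\}$, $w=2^s$, and each integer $t$ with $-L/(2w)+1\le t\le L/(2w)-1$, let $S(w,t)=\{L/2-w/2+wt,\ L/2-w/2+wt+1,\ L/2+w/2+wt,\ L/2+w/2+wt+1\}$. Horizontal boundary checks are the $S(w,t)$ with $n=a$ on the top row (position $j\mapsto(1,j)$); vertical boundary checks are the $S(w,t)$ with $n=b$ on the leftmost column (position $i\mapsto(i,1)$). $uRM(m)$ is the set of $x\in\mathbb{F}_2^{2^m}$ whose sum over every check is $0$. *)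

theory Defs
  imports Main "HOL-Library.Z2" "HOL-Library.Indicator_Function" "HOL-Library.Function_Algebras"
begin

definition colexp :: "nat \<Rightarrow> nat" where "colexp m = (m + 1) div 2"
definition rowexp :: "nat \<Rightarrow> nat" where "rowexp m = m div 2"

definition grid :: "nat \<Rightarrow> (nat \<times> nat) set" where
  "grid m = {1..2 ^ rowexp m} \<times> {1..2 ^ colexp m}"

definition bulk_checks :: "nat \<Rightarrow> (nat \<times> nat) set set" where
  "bulk_checks m = {{(i, j), (i + 1, j), (i, j + 1), (i + 1, j + 1)} | i j.
      1 \<le> i \<and> i < 2 ^ rowexp m \<and> 1 \<le> j \<and> j < 2 ^ colexp m}"

text \<open>S(w,t) on a line of length L = 2^n with w = 2^s (all values are positive integers in range).\<close>
definition bchk :: "nat \<Rightarrow> nat \<Rightarrow> int \<Rightarrow> nat set" where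
  "bchk n s t = (let L = (2::int) ^ n; w = (2::int) ^ s in
     nat ` {L div 2 - w div 2 + w * t, L div 2 - w div 2 + w * t + 1,
            L div 2 + w div 2 + w * t, L div 2 + w div 2 + w * t + 1})"

definition line_checks :: "nat \<Rightarrow> nat set set" where
  "line_checks n = {bchk n s t | s t. 1 \<le> s \<and> s \<le> n - 1 \<and>
      - ((2::int) ^ n div (2 * 2 ^ s)) + 1 \<le> t \<and> t \<le> (2::int) ^ n div (2 * 2 ^ s) - 1}"

definition horiz_checks :: "nat \<Rightarrow> (nat \<times> nat) set set" where
  "horiz_checks m = (\<lambda>S. (\<lambda>j. (1, j)) ` S) ` line_checks (colexp m)"

definition vert_checks :: "nat \<Rightarrow> (nat \<times> nat) set set" where
  "vert_checks m = (\<lambda>S. (\<lambda>i. (i, 1)) ` S) ` line_checks (rowexp m)"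

definition checks :: "nat \<Rightarrow> (nat \<times> nat) set set" where
  "checks m = bulk_checks m \<union> horiz_checks m \<union> vert_checks m"

text \<open>F_2^{2^m}: bit-valued functions on positions, vanishing off the grid.\<close>
definition f2scale :: "bit \<Rightarrow> ((nat \<times> nat) \<Rightarrow> bit) \<Rightarrow> ((nat \<times> nat) \<Rightarrow> bit)" where
  "f2scale c x = (\<lambda>p. c * x p)"

definition ambient :: "nat \<Rightarrow> ((nat \<times> nat) \<Rightarrow> bit) set" where
  "ambient m = {x. \<forall>p. p \<notin> grid m \<longrightarrow> x p = 0}"

definition uRM :: "nat \<Rightarrow> ((nat \<times> nat) \<Rightarrow> bit) set" where
  "uRM m = {x \<in> ambient m. \<forall>C \<in> checks m. (\<Sum>p\<in>C. x p) = 0}"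

end

theory Submission
  imports Defs "HOL-Library.Product_Lexorder"
begin


lemma f2_module: "vector_space f2scale"
  unfolding vector_space_def module_def f2scale_def
  by (auto simp: fun_eq_iff algebra_simps)

lemma sum_fun_apply: "finite T \<Longrightarrow> (\<Sum>v\<in>T. f v) p = (\<Sum>v\<in>T. f v p)"
  by (induction T rule: finite_induct) auto

lemma bit_add_self: "(a::bit) + a = 0"
  by (cases a) auto



definition tri :: "'a::linorder set set \<Rightarrow> bool" where
 "tri CC \<longleftrightarrow> finite CC \<and> (\<forall>C\<in>CC. finite C \<and> C \<noteq> {}) \<and> inj_on Max CC"

lemma bit_nz: "(b::bit) \<noteq> 0 \<longleftrightarrow> b = 1"
  by (cases b) auto

lemma tri_key:
  assumes "tri CC" "C \<in> CC" "D \<in> CC" "Max D \<in> C" "C \<noteq> D"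
  shows "Max D < Max C"
proof -
  have "Max D \<le> Max C" using assms unfolding tri_def by auto
  moreover have "Max D \<noteq> Max C" using assms unfolding tri_def inj_on_def by metis
  ultimately show ?thesis by simp
qed

lemma tri_indep:
  assumes tri: "tri CC" and T: "T \<subseteq> CC"
    and z: "\<And>p. (\<Sum>C\<in>T. u C * indicator C p) = (0::bit)"
  shows "\<forall>C\<in>T. u C = 0"
proof (rule ccontr)
  assume H: "\<not> (\<forall>C\<in>T. u C = 0)"
  define T1 where "T1 = {C\<in>T. u C \<noteq> 0}"
  have fT: "finite T" using tri T unfolding tri_def by (auto intro: finite_subset)
  have T1ne: "T1 \<noteq> {}" "finite T1" using H fT unfolding T1_def by auto
  obtain C0 where C0: "C0 \<in> T1" "\<And>C. C \<in> T1 \<Longrightarrow> Max C \<le> Max C0"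
  proof -
    have "Max (Max ` T1) \<in> Max ` T1" using T1ne by (intro Max_in) auto
    then obtain C0 where "C0 \<in> T1" "Max C0 = Max (Max ` T1)" by auto
    moreover have "Max C \<le> Max (Max ` T1)" if "C \<in> T1" for C
      using T1ne that by (intro Max_ge) auto
    ultimately show ?thesis using that by metis
  qed
  define p where "p = Max C0"
  have C0T: "C0 \<in> T" "u C0 = 1" using C0 bit_nz unfolding T1_def by auto
  have pC0: "p \<in> C0" using C0T T tri unfolding tri_def p_def by auto
  have "(\<Sum>C\<in>T. u C * indicator C p) = (\<Sum>C\<in>T. if C = C0 then 1 else 0)"
  proof (rule sum.cong)
    fix C assume C: "C \<in> T"
    show "u C * indicator C p = (if C = C0 then 1 else 0)"
    proof (cases "C = C0")
      case True then show ?thesis using C0T pC0 by simp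
    next
      case False
      show ?thesis
      proof (cases "u C = 0")
        case False2: False
        then have "C \<in> T1" using C unfolding T1_def by auto
        then have "Max C \<le> p" using C0 p_def by auto
        moreover have "p \<notin> C"
        proof
          assume "p \<in> C"
          have "C \<in> CC" "C0 \<in> CC" using C C0T T by auto
          then have "Max C0 < Max C" using tri_key[OF tri, of C C0] \<open>p \<in> C\<close> False unfolding p_def by blast
          then show False using \<open>Max C \<le> p\<close> unfolding p_def by simp
        qed
        ultimately show ?thesis using False by simp
      qed (simp add: False)
    qed
  qed simp
  also have "\<dots> = 1" using C0T fT by simp
  finally show False using z[of p] by simp
qed


lemma tri_unique:
  fixes x :: "'a::linorder \<Rightarrow> bit"
  assumes tri: "tri CC" and sup: "\<And>p. p \<notin> Max ` CC \<Longrightarrow> x p = 0"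
    and z: "\<And>C. C \<in> CC \<Longrightarrow> (\<Sum>p\<in>C. x p) = 0"
  shows "x q = 0"
proof (rule ccontr)
  assume "x q \<noteq> 0"
  define Z where "Z = {C\<in>CC. x (Max C) \<noteq> 0}"
  have "q \<in> Max ` CC"
  proof (rule ccontr)
    assume "q \<notin> Max ` CC"
    then have "x q = 0" by (rule sup)
    then show False using \<open>x q \<noteq> 0\<close> by simp
  qed
  then have Zne: "Z \<noteq> {}" "finite Z" using \<open>x q \<noteq> 0\<close> tri unfolding Z_def tri_def by auto
  obtain C0 where C0: "C0 \<in> Z" "\<And>C. C \<in> Z \<Longrightarrow> Max C0 \<le> Max C"
  proof -
    have "Min (Max ` Z) \<in> Max ` Z" using Zne by (intro Min_in) auto
    then obtain C0 where "C0 \<in> Z" "Max C0 = Min (Max ` Z)" by auto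
    moreover have "Min (Max ` Z) \<le> Max C" if "C \<in> Z" for C
      using Zne that by (intro Min_le) auto
    ultimately show ?thesis using that by metis
  qed
  have C0C: "C0 \<in> CC" "x (Max C0) = 1" using C0 bit_nz unfolding Z_def by auto
  have fin: "finite C0" "C0 \<noteq> {}" using tri C0C unfolding tri_def by auto
  have "(\<Sum>p\<in>C0. x p) = (\<Sum>p\<in>C0. if p = Max C0 then 1 else 0)"
  proof (rule sum.cong)
    fix p assume p: "p \<in> C0"
    show "x p = (if p = Max C0 then 1 else 0)"
    proof (cases "p = Max C0")
      case False
      have "p \<le> Max C0" using p fin by simp
      with False have lt: "p < Max C0" by simp
      show ?thesis
      proof (rule ccontr)
        assume "\<not> ?thesis"
        then have "x p \<noteq> 0" using False by simp
        then obtain D where D: "D \<in> CC" "p = Max D" using sup by blast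
        then have "D \<in> Z" using \<open>x p \<noteq> 0\<close> unfolding Z_def by auto
        then have "Max C0 \<le> Max D" by (rule C0(2))
        then show False using lt D(2) by simp
      qed
    qed (simp add: C0C)
  qed simp
  also have "\<dots> = 1" using fin by simp
  finally show False using z[OF C0C(1)] by simp
qed


lemma tri_solve:
  fixes y :: "'a::linorder set \<Rightarrow> bit"
  assumes tri: "tri CC"
  shows "\<exists>x. (\<forall>p. p \<notin> Max ` CC \<longrightarrow> x p = 0) \<and> (\<forall>C\<in>CC. (\<Sum>p\<in>C. x p) = y C)"
proof -
  have fin: "finite CC" using tri unfolding tri_def by auto
  have "DD \<subseteq> CC \<longrightarrow> (\<exists>x. (\<forall>p. p \<notin> Max ` DD \<longrightarrow> x p = 0) \<and> (\<forall>C\<in>DD. (\<Sum>p\<in>C. x p) = y C))"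
    if "finite DD" for DD
    using that
  proof (induction DD rule: finite_ranking_induct[where f = Max])
    case empty
    show ?case by (intro impI exI[of _ "\<lambda>_. 0"]) auto
  next
    case (insert C0 S)
    show ?case
    proof
      assume sub: "insert C0 S \<subseteq> CC"
      then obtain x where x: "\<forall>p. p \<notin> Max ` S \<longrightarrow> x p = 0" "\<forall>C\<in>S. (\<Sum>p\<in>C. x p) = y C"
        using insert by auto
      have C0: "C0 \<in> CC" "finite C0" "C0 \<noteq> {}" using sub tri unfolding tri_def by auto
      show "\<exists>x. (\<forall>p. p \<notin> Max ` insert C0 S \<longrightarrow> x p = 0) \<and> (\<forall>C\<in>insert C0 S. (\<Sum>p\<in>C. x p) = y C)"
      proof (cases "C0 \<in> S")
        case True
        then have "insert C0 S = S" by auto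
        then show ?thesis using x by (intro exI[of _ x]) simp
      next
        case False
        have notin: "Max C0 \<notin> C" if "C \<in> S" for C
        proof
          assume "Max C0 \<in> C"
          have "C \<in> CC" "C \<noteq> C0" using that sub False by auto
          then have "Max C0 < Max C" using tri_key[OF tri, of C C0] C0(1) \<open>Max C0 \<in> C\<close> by blast
          then show False using insert.hyps(2)[OF that] by simp
        qed
        have x0: "x (Max C0) = 0"
        proof -
          have "Max C0 \<notin> Max ` S"
          proof
            assume "Max C0 \<in> Max ` S"
            then obtain C where C: "C \<in> S" "Max C0 = Max C" by blast
            have "C \<in> CC" using sub C(1) by blast
            then have "finite C" "C \<noteq> {}" using tri unfolding tri_def by auto
            then have "Max C \<in> C" by (rule Max_in)
            then show False using notin[OF C(1)] C(2) by simp
          qed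
          then show ?thesis using x by simp
        qed
        define x' where "x' = x(Max C0 := y C0 + (\<Sum>p\<in>C0. x p))"
        have "(\<Sum>p\<in>C0. x' p) = y C0"
        proof -
          have m: "Max C0 \<in> C0" using C0 by simp
          have "(\<Sum>p\<in>C0. x' p) = x' (Max C0) + (\<Sum>p\<in>C0 - {Max C0}. x' p)"
            by (rule sum.remove[OF C0(2) m])
          also have "(\<Sum>p\<in>C0 - {Max C0}. x' p) = (\<Sum>p\<in>C0 - {Max C0}. x p)"
            unfolding x'_def by (rule sum.cong) auto
          also have "\<dots> = (\<Sum>p\<in>C0. x p)"
            using sum.remove[OF C0(2) m, of x] x0 by simp
          finally have e1: "(\<Sum>p\<in>C0. x' p) = x' (Max C0) + (\<Sum>p\<in>C0. x p)" .
          have e2: "x' (Max C0) = y C0 + (\<Sum>p\<in>C0. x p)" unfolding x'_def by (rule fun_upd_same)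
          show ?thesis unfolding e1 e2 by (simp only: add.assoc bit_add_self add_0_right)
        qed
        moreover have "(\<Sum>p\<in>C. x' p) = y C" if "C \<in> S" for C
        proof -
          have "(\<Sum>p\<in>C. x' p) = (\<Sum>p\<in>C. x p)"
            unfolding x'_def using notin[OF that] by (intro sum.cong) auto
          then show ?thesis using x that by auto
        qed
        moreover have "\<forall>p. p \<notin> Max ` insert C0 S \<longrightarrow> x' p = 0"
          using x unfolding x'_def by auto
        ultimately show ?thesis by (intro exI[of _ x']) auto
      qed
    qed
  qed
  from this[OF fin] show ?thesis by simp
qed



lemma pow2odd_aux:
  fixes t t' :: int
  assumes "a \<le> b" "(2::int)^a * (2*t+1) = 2^b * (2*t'+1)"
  shows "a = b \<and> t = t'"
proof -
  obtain k where b: "b = a + k" using assms(1) le_Suc_ex by blast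
  have "(2::int)^a * (2*t+1) = 2^a * (2^k * (2*t'+1))"
    using assms(2) unfolding b by (simp add: power_add mult.assoc)
  then have e: "2*t+1 = 2^k * (2*t'+1)" by simp
  show ?thesis
  proof (cases k)
    case 0 then show ?thesis using e b by simp
  next
    case (Suc k')
    then have "2*t+1 = 2 * (2^k' * (2*t'+1))" using e by simp
    then show ?thesis by presburger
  qed
qed

lemma pow2odd:
  fixes t t' :: int
  assumes "(2::int)^a * (2*t+1) = 2^b * (2*t'+1)"
  shows "a = b \<and> t = t'"
  using pow2odd_aux[of a b t t'] pow2odd_aux[of b a t' t] assms by (cases "a \<le> b") auto

lemma bchk_eq:
  fixes n s :: nat and t :: int
  assumes "1 \<le> s" "s \<le> n - 1" "-((2::int)^n div (2*2^s)) + 1 \<le> t" "t \<le> (2::int)^n div (2*2^s) - 1"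
  shows "\<exists>a0. bchk n s t = {a0, a0+1, a0+2^s, a0+2^s+1} \<and> 1 \<le> a0 \<and> a0 + 2^s + 1 \<le> 2^n
     \<and> int a0 + 2^s = 2^(n-1) + 2^(s-1)*(2*t+1)"
proof -
  obtain s0 where s0: "s = Suc s0" using assms(1) by (cases s) auto
  define k where "k = n - s - 1"
  have sk: "s = Suc s0" "n = s0 + k + 2" using s0 assms(1,2) unfolding k_def by arith+
  define H where "H = (2::int)^s0"
  define K where "K = (2::int)^k"
  have H1: "H \<ge> 1" "K \<ge> 1" unfolding H_def K_def by simp_all
  have f1: "(2::int)^n = 4*H*K" unfolding sk H_def K_def by (simp add: power_add)
  have f2: "(2::int)^s = 2*H" unfolding sk H_def by simp
  have f3: "(2::int)^n div (2*2^s) = K" unfolding f1 f2 using H1 by simp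
  have f4: "(2::int)^n div 2 = 2*H*K" unfolding f1 by simp
  have f5: "(2::int)^s div 2 = H" unfolding f2 by simp
  have f6: "(2::int)^(n-1) = 2*H*K" unfolding sk H_def K_def by (simp add: power_add)
  have f7: "(2::int)^(s-1) = H" unfolding sk H_def by simp
  define q where "q = 2*K - 1 + 2*t"
  have q: "q \<ge> 1" "q \<le> 4*K - 3" using assms(3,4) unfolding f3 q_def by auto
  define A where "A = 2*H*K - H + 2*H*t"
  have AHq: "A = H*q" unfolding A_def q_def by (simp add: algebra_simps)
  have A1: "A \<ge> H" unfolding AHq using q H1 by simp
  have "A + 2*H + 1 = H*(q+2) + 1" unfolding AHq by (simp add: algebra_simps)
  also have "\<dots> \<le> H*(4*K-1) + 1" using q H1 by (intro add_right_mono mult_left_mono) auto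
  also have "\<dots> \<le> 4*H*K" using H1 by (simp add: algebra_simps)
  finally have A2: "A + 2*H + 1 \<le> 4*H*K" .
  define a0 where "a0 = nat A"
  have Aa: "A = int a0" unfolding a0_def using A1 H1 by simp
  have Hs: "2*H = int (2^s)" using f2 by simp
  have "bchk n s t = nat ` {A, A+1, A + 2*H, A + 2*H + 1}"
    unfolding bchk_def Let_def f4 f5 A_def f2 by (simp add: algebra_simps)
  also have "\<dots> = {a0, a0+1, a0+2^s, a0+2^s+1}"
  proof -
    have i1: "int a0 + 1 = int (a0 + 1)" "int a0 + int (2^s) + 1 = int (a0 + 2^s + 1)" "int a0 + int (2^s) = int (a0 + 2^s)"
      "int (a0 + 2^s) + 1 = int (a0 + 2^s + 1)"
      by simp_all
    show ?thesis unfolding Aa Hs i1 by (simp only: image_insert image_empty nat_int)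
  qed
  finally have e: "bchk n s t = {a0, a0+1, a0+2^s, a0+2^s+1}" .
  have "1 \<le> a0" using A1 H1 Aa by simp
  moreover have "a0 + 2^s + 1 \<le> 2^n"
  proof -
    have "int (a0 + 2^s + 1) \<le> int (2^n)" using A2 Aa Hs f1 by simp
    then show ?thesis by (simp only: of_nat_le_iff)
  qed
  moreover have "int a0 + 2^s = 2^(n-1) + 2^(s-1)*(2*t+1)"
    unfolding f6 f7 f2 Aa[symmetric] A_def by (simp add: algebra_simps)
  ultimately show ?thesis using e by blast
qed



definition Pset :: "nat \<Rightarrow> (nat \<times> int) set" where
  "Pset n = Sigma {1..n-1} (\<lambda>s. {-((2::int)^n div (2*2^s)) + 1 .. (2::int)^n div (2*2^s) - 1})"

lemma line_checks_img: "line_checks n = (\<lambda>(s,t). bchk n s t) ` Pset n"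
  unfolding line_checks_def Pset_def
  apply (auto simp: image_iff)
  subgoal for a b by (rule exI[of _ a], rule exI[of _ b]) simp
  done

lemma Pset_finite: "finite (Pset n)"
  unfolding Pset_def by auto

lemma bchk_props:
  assumes "(s,t) \<in> Pset n"
  shows "finite (bchk n s t) \<and> bchk n s t \<noteq> {} \<and> bchk n s t \<subseteq> {1..2^n} \<and> 2 \<le> Max (bchk n s t)
    \<and> int (Max (bchk n s t)) = 2^(n-1) + 2^(s-1)*(2*t+1) + 1"
proof -
  from assms have a: "1 \<le> s" "s \<le> n - 1" "-((2::int)^n div (2*2^s)) + 1 \<le> t" "t \<le> (2::int)^n div (2*2^s) - 1"
    unfolding Pset_def by auto
  obtain a0 where e: "bchk n s t = {a0, a0+1, a0+2^s, a0+2^s+1}" "1 \<le> a0" "a0 + 2^s + 1 \<le> 2^n"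
     "int a0 + 2^s = 2^(n-1) + 2^(s-1)*(2*t+1)"
    using bchk_eq[OF a] by blast
  have M: "Max (bchk n s t) = a0 + 2^s + 1"
    unfolding e(1) by (rule Max_eqI) auto
  have "(2::nat) ^ s \<ge> 1" by simp
  then show ?thesis using e M by auto
qed

lemma Pset_inj: "inj_on (\<lambda>(s,t). Max (bchk n s t)) (Pset n)"
proof (rule inj_onI, clarify)
  fix s t s' t'
  assume p: "(s,t) \<in> Pset n" "(s',t') \<in> Pset n" and eq: "Max (bchk n s t) = Max (bchk n s' t')"
  have "int (Max (bchk n s t)) = int (Max (bchk n s' t'))" using eq by simp
  then have "(2::int)^(s-1)*(2*t+1) = 2^(s'-1)*(2*t'+1)"
    using bchk_props[OF p(1)] bchk_props[OF p(2)] by simp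
  then have "s - 1 = s' - 1" "t = t'" using pow2odd by blast+
  moreover have "1 \<le> s" "1 \<le> s'" using p unfolding Pset_def by auto
  ultimately show "s = s' \<and> t = t'" by simp
qed

lemma geo_count: "n \<ge> 1 \<Longrightarrow> (\<Sum>k\<in>{1..<n}. (2::nat)^k - 1) = 2^n - n - 1"
proof (induction n rule: dec_induct)
  case base then show ?case by simp
next
  case (step n)
  have "Suc n \<le> 2^n" by (rule Suc_leI) (rule less_exp)
  then have "(2::nat)^n \<ge> n + 1" by simp
  then show ?case using step by (simp add: sum.op_ivl_Suc)
qed

lemma card_Pset: "card (Pset n) = 2^n - n - 1"
proof -
  have "card (Pset n) = (\<Sum>s\<in>{1..n-1}. card {-((2::int)^n div (2*2^s)) + 1 .. (2::int)^n div (2*2^s) - 1})"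
    unfolding Pset_def by (rule card_SigmaI) auto
  also have "\<dots> = (\<Sum>s\<in>{1..n-1}. 2^(n-s) - 1)"
  proof (rule sum.cong)
    fix s assume s: "s \<in> {1..n-1}"
    define k where "k = n - s - 1"
    have k: "n = s + k + 1" using s unfolding k_def by auto
    have "(2::int)^n div (2*2^s) = 2^k" unfolding k by (simp add: power_add)
    moreover have "(2::nat)^(n-s) = 2 * 2^k" unfolding k by simp
    moreover have "(2::int) * 2^k - 1 = int (2 * 2^k - 1)"
      by (simp add: of_nat_diff)
    ultimately show "card {-((2::int)^n div (2*2^s)) + 1 .. (2::int)^n div (2*2^s) - 1} = 2^(n-s) - 1"
      by (simp only: card_atLeastAtMost_int)
  qed simp
  also have "\<dots> = (\<Sum>k\<in>{1..<n}. 2^k - 1)"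
    by (rule sum.reindex_bij_witness[of _ "\<lambda>k. n - k" "\<lambda>k. n - k"]) auto
  also have "\<dots> = 2^n - n - 1"
  proof (cases "n = 0")
    case False then show ?thesis using geo_count by simp
  qed simp
  finally show ?thesis .
qed

lemma LC_props:
  "finite (line_checks n)"
  "S \<in> line_checks n \<Longrightarrow> finite S \<and> S \<noteq> {} \<and> S \<subseteq> {1..2^n} \<and> 2 \<le> Max S"
  "inj_on Max (line_checks n)"
  "card (line_checks n) = 2^n - n - 1"
proof -
  show "finite (line_checks n)" unfolding line_checks_img using Pset_finite by simp
  show "S \<in> line_checks n \<Longrightarrow> finite S \<and> S \<noteq> {} \<and> S \<subseteq> {1..2^n} \<and> 2 \<le> Max S"
  proof -
    assume "S \<in> line_checks n"
    then obtain s t where "(s,t) \<in> Pset n" "S = bchk n s t" unfolding line_checks_img by auto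
    then show ?thesis using bchk_props by simp
  qed
  have i: "inj_on (Max \<circ> (\<lambda>(s,t). bchk n s t)) (Pset n)"
    using Pset_inj by (simp add: comp_def case_prod_unfold)
  show "inj_on Max (line_checks n)" unfolding line_checks_img by (rule inj_on_imageI[OF i])
  have "card (line_checks n) = card (Pset n)" unfolding line_checks_img
    by (rule card_image[OF inj_on_imageI2[OF i]])
  then show "card (line_checks n) = 2^n - n - 1" using card_Pset by simp
qed



definition Bk :: "nat \<Rightarrow> nat \<Rightarrow> (nat \<times> nat) set" where
  "Bk i j = {(i, j), (i + 1, j), (i, j + 1), (i + 1, j + 1)}"

lemma bulk_img: "bulk_checks m = (\<lambda>(i,j). Bk i j) ` ({1..<2 ^ rowexp m} \<times> {1..<2 ^ colexp m})"
  unfolding bulk_checks_def Bk_def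
  apply (auto simp: image_iff)
  subgoal for i j by (rule exI[of _ i], rule exI[of _ j]) simp
  done

lemma Max_Bk: "Max (Bk i j) = (i+1, j+1)"
  unfolding Bk_def by (rule Max_eqI) auto

lemma card_grid: "card (grid m) = 2 ^ m"
proof -
  have "card (grid m) = 2 ^ rowexp m * 2 ^ colexp m" unfolding grid_def by (simp add: card_cartesian_product)
  also have "\<dots> = 2 ^ (rowexp m + colexp m)" by (simp add: power_add)
  also have "rowexp m + colexp m = m" unfolding rowexp_def colexp_def by arith
  finally show ?thesis .
qed

definition hmap :: "nat set \<Rightarrow> (nat \<times> nat) set" where "hmap S = (\<lambda>j. (1, j)) ` S"
definition vmap :: "nat set \<Rightarrow> (nat \<times> nat) set" where "vmap S = (\<lambda>i. (i, 1)) ` S"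

lemma Max_hmap: "finite S \<Longrightarrow> S \<noteq> {} \<Longrightarrow> Max (hmap S) = (1, Max S)"
  unfolding hmap_def by (rule mono_Max_commute[symmetric]) (auto intro: monoI)

lemma Max_vmap: "finite S \<Longrightarrow> S \<noteq> {} \<Longrightarrow> Max (vmap S) = (Max S, 1)"
  unfolding vmap_def by (rule mono_Max_commute[symmetric]) (auto intro: monoI)

lemma inj_hmap: "inj_on hmap X"
  unfolding hmap_def by (rule inj_onI) (simp add: inj_image_eq_iff inj_def)

lemma inj_vmap: "inj_on vmap X"
  unfolding vmap_def by (rule inj_onI) (simp add: inj_image_eq_iff inj_def)

lemma horiz_img: "horiz_checks m = hmap ` line_checks (colexp m)"
  unfolding horiz_checks_def hmap_def ..

lemma vert_img: "vert_checks m = vmap ` line_checks (rowexp m)"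
  unfolding vert_checks_def vmap_def ..

lemma bulk_prop:
  assumes "C \<in> bulk_checks m"
  shows "finite C \<and> C \<noteq> {} \<and> C \<subseteq> grid m \<and> fst (Max C) \<ge> 2 \<and> snd (Max C) \<ge> 2"
proof -
  obtain i j where ij: "C = Bk i j" "1 \<le> i" "i < 2 ^ rowexp m" "1 \<le> j" "j < 2 ^ colexp m"
    using assms unfolding bulk_img by auto
  have "C \<subseteq> grid m" unfolding ij(1) Bk_def grid_def using ij(2-5) by auto
  then show ?thesis using ij Max_Bk unfolding Bk_def by auto
qed

lemma horiz_prop:
  assumes "C \<in> horiz_checks m"
  shows "finite C \<and> C \<noteq> {} \<and> C \<subseteq> grid m \<and> fst (Max C) = 1 \<and> snd (Max C) \<ge> 2"
proof -
  obtain S where S: "S \<in> line_checks (colexp m)" "C = hmap S" using assms unfolding horiz_img by auto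
  have P: "finite S" "S \<noteq> {}" "S \<subseteq> {1..2 ^ colexp m}" "2 \<le> Max S" using LC_props(2)[OF S(1)] by auto
  have "C \<subseteq> grid m" unfolding S(2) hmap_def grid_def using P(3) by auto
  then show ?thesis using P S(2) Max_hmap[OF P(1,2)] unfolding hmap_def by auto
qed

lemma vert_prop:
  assumes "C \<in> vert_checks m"
  shows "finite C \<and> C \<noteq> {} \<and> C \<subseteq> grid m \<and> snd (Max C) = 1 \<and> fst (Max C) \<ge> 2"
proof -
  obtain S where S: "S \<in> line_checks (rowexp m)" "C = vmap S" using assms unfolding vert_img by auto
  have P: "finite S" "S \<noteq> {}" "S \<subseteq> {1..2 ^ rowexp m}" "2 \<le> Max S" using LC_props(2)[OF S(1)] by auto
  have "C \<subseteq> grid m" unfolding S(2) vmap_def grid_def using P(3) by auto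
  then show ?thesis using P S(2) Max_vmap[OF P(1,2)] unfolding vmap_def by auto
qed

lemma inj_bulk: "inj_on Max (bulk_checks m)"
proof (rule inj_onI)
  fix C D assume "C \<in> bulk_checks m" "D \<in> bulk_checks m" "Max C = Max D"
  then obtain i j i' j' where "C = Bk i j" "D = Bk i' j'" "Max C = Max D"
    unfolding bulk_img by auto
  then show "C = D" using Max_Bk by simp
qed

lemma inj_horiz: "inj_on Max (horiz_checks m)"
proof (rule inj_onI)
  fix C D assume a: "C \<in> horiz_checks m" "D \<in> horiz_checks m" "Max C = Max D"
  then obtain S T where S: "S \<in> line_checks (colexp m)" "C = hmap S" "T \<in> line_checks (colexp m)" "D = hmap T"
    unfolding horiz_img by auto
  have "Max C = (1, Max S)" "Max D = (1, Max T)"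
    using S Max_hmap LC_props(2) by auto
  then have "Max S = Max T" using a(3) by simp
  then have "S = T" using LC_props(3) S(1,3) by (auto dest: inj_onD)
  then show "C = D" using S by simp
qed

lemma inj_vert: "inj_on Max (vert_checks m)"
proof (rule inj_onI)
  fix C D assume a: "C \<in> vert_checks m" "D \<in> vert_checks m" "Max C = Max D"
  then obtain S T where S: "S \<in> line_checks (rowexp m)" "C = vmap S" "T \<in> line_checks (rowexp m)" "D = vmap T"
    unfolding vert_img by auto
  have "Max C = (Max S, 1)" "Max D = (Max T, 1)"
    using S Max_vmap LC_props(2) by auto
  then have "Max S = Max T" using a(3) by simp
  then have "S = T" using LC_props(3) S(1,3) by (auto dest: inj_onD)
  then show "C = D" using S by simp
qed

lemma checks_prop:
  assumes "C \<in> checks m"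
  shows "finite C \<and> C \<noteq> {} \<and> C \<subseteq> grid m"
  using assms bulk_prop horiz_prop vert_prop unfolding checks_def by blast

lemma finite_checks: "finite (checks m)"
proof -
  have "finite (bulk_checks m)" unfolding bulk_img by simp
  moreover have "finite (horiz_checks m)" unfolding horiz_img using LC_props(1) by simp
  moreover have "finite (vert_checks m)" unfolding vert_img using LC_props(1) by simp
  ultimately show ?thesis unfolding checks_def by simp
qed

lemma class_b: "C \<in> checks m \<Longrightarrow> fst (Max C) \<ge> 2 \<Longrightarrow> snd (Max C) \<ge> 2 \<Longrightarrow> C \<in> bulk_checks m"
  unfolding checks_def using horiz_prop[of C m] vert_prop[of C m] by auto

lemma class_h: "C \<in> checks m \<Longrightarrow> fst (Max C) = 1 \<Longrightarrow> C \<in> horiz_checks m"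
  unfolding checks_def using bulk_prop[of C m] vert_prop[of C m] by auto

lemma class_v: "C \<in> checks m \<Longrightarrow> snd (Max C) = 1 \<Longrightarrow> fst (Max C) \<ge> 2 \<Longrightarrow> C \<in> vert_checks m"
  unfolding checks_def using bulk_prop[of C m] horiz_prop[of C m] by auto

lemma inj_checks: "inj_on Max (checks m)"
proof (rule inj_onI)
  fix C D assume C: "C \<in> checks m" and D: "D \<in> checks m" and e: "Max C = Max D"
  consider "C \<in> bulk_checks m" | "C \<in> horiz_checks m" | "C \<in> vert_checks m"
    using C unfolding checks_def by blast
  then show "C = D"
  proof cases
    case 1
    then have "fst (Max D) \<ge> 2" "snd (Max D) \<ge> 2" using bulk_prop[of C m] e by simp_all
    then have "D \<in> bulk_checks m" using class_b[OF D] by simp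
    then show ?thesis using inj_onD[OF inj_bulk e 1] by simp
  next
    case 2
    then have "fst (Max D) = 1" using horiz_prop[of C m] e by simp
    then have "D \<in> horiz_checks m" using class_h[OF D] by simp
    then show ?thesis using inj_onD[OF inj_horiz e 2] by simp
  next
    case 3
    then have "snd (Max D) = 1" "fst (Max D) \<ge> 2" using vert_prop[of C m] e by simp_all
    then have "D \<in> vert_checks m" using class_v[OF D] by simp
    then show ?thesis using inj_onD[OF inj_vert e 3] by simp
  qed
qed

lemma card_checks:
  assumes "m \<ge> 2"
  shows "card (checks m) = 2 ^ m - m - 1"
proof -
  define a where "a = colexp m"
  define b where "b = rowexp m"
  have ab: "a + b = m" "a \<ge> 1" "b \<ge> 1" using assms unfolding a_def b_def colexp_def rowexp_def by arith+
  have d1: "bulk_checks m \<inter> horiz_checks m = {}"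
  proof (rule equals0I)
    fix C assume "C \<in> bulk_checks m \<inter> horiz_checks m"
    then show False using bulk_prop[of C m] horiz_prop[of C m] by simp
  qed
  have d2: "(bulk_checks m \<union> horiz_checks m) \<inter> vert_checks m = {}"
  proof (rule equals0I)
    fix C assume "C \<in> (bulk_checks m \<union> horiz_checks m) \<inter> vert_checks m"
    then show False using bulk_prop[of C m] horiz_prop[of C m] vert_prop[of C m] by auto
  qed
  have f: "finite (bulk_checks m)" "finite (horiz_checks m)" "finite (vert_checks m)"
    using finite_checks[of m] unfolding checks_def by auto
  have cb: "card (bulk_checks m) = (2^b - 1) * (2^a - 1)"
  proof -
    have "inj_on (\<lambda>(i,j). Bk i j) ({1..<2 ^ rowexp m} \<times> {1..<2 ^ colexp m})"
    proof (rule inj_onI, clarify)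
      fix i j i' j' assume "Bk i j = Bk i' j'"
      then have "Max (Bk i j) = Max (Bk i' j')" by simp
      then show "i = i' \<and> j = j'" by (simp add: Max_Bk)
    qed
    then show ?thesis unfolding bulk_img a_def b_def by (simp add: card_image card_cartesian_product)
  qed
  have ch: "card (horiz_checks m) = 2^a - a - 1"
    unfolding horiz_img a_def by (simp add: card_image[OF inj_hmap] LC_props(4))
  have cv: "card (vert_checks m) = 2^b - b - 1"
    unfolding vert_img b_def by (simp add: card_image[OF inj_vmap] LC_props(4))
  have "card (checks m) = card (bulk_checks m) + card (horiz_checks m) + card (vert_checks m)"
    unfolding checks_def using f d1 d2 by (simp add: card_Un_disjoint)
  also have "\<dots> = 2 ^ m - m - 1"
  proof -
    define x where "x = (2::nat)^a - 1"
    define y where "y = (2::nat)^b - 1"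
    have x: "2^a = x + 1" unfolding x_def by simp
    have y: "2^b = y + 1" unfolding y_def by simp
    have xa: "x \<ge> a" using less_exp[of a] x by simp
    have yb: "y \<ge> b" using less_exp[of b] y by simp
    have "(2::nat)^m = (x+1)*(y+1)" using ab(1) x y by (metis power_add)
    then have "(2::nat)^m = x*y + x + y + 1" by (simp add: algebra_simps)
    then show ?thesis unfolding cb ch cv x y using xa yb ab(1) by (simp add: mult.commute)
  qed
  finally show ?thesis .
qed

lemma tri_checks: "tri (checks m)"
  unfolding tri_def using finite_checks checks_prop inj_checks by blast



lemma bit_eq_of_add: "(a::bit) + b = 0 \<Longrightarrow> a = b"
  by (cases a; cases b) auto

lemma inj_indicator_bit: "inj (\<lambda>C. indicator C :: 'a \<Rightarrow> bit)"
proof (rule injI)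
  fix A B :: "'a set"
  assume e: "(indicator A :: 'a \<Rightarrow> bit) = indicator B"
  show "A = B"
  proof (rule set_eqI)
    fix x
    have "(indicator A x :: bit) = indicator B x" using e by simp
    then show "x \<in> A \<longleftrightarrow> x \<in> B" by (auto simp: indicator_def split: if_splits)
  qed
qed

lemma f2_sum_apply: "finite T \<Longrightarrow> (\<Sum>v\<in>T. f2scale (u v) (g v)) p = (\<Sum>v\<in>T. u v * g v p)"
  by (simp add: sum_fun_apply f2scale_def)

lemma part_indep:
  "\<not> module.dependent f2scale ((\<lambda>C. indicator C :: (nat \<times> nat) \<Rightarrow> bit) ` checks m)"
proof
  interpret V: vector_space f2scale by (rule f2_module)
  assume "V.dependent ((\<lambda>C. indicator C :: (nat \<times> nat) \<Rightarrow> bit) ` checks m)"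
  then obtain T u where T: "finite T" "T \<subseteq> (\<lambda>C. indicator C) ` checks m"
      "(\<Sum>v\<in>T. f2scale (u v) v) = 0" "\<exists>v\<in>T. u v \<noteq> 0"
    unfolding V.dependent_explicit by blast
  obtain T' where T': "T' \<subseteq> checks m" "T = (\<lambda>C. indicator C) ` T'"
    using T(2) unfolding subset_image_iff by blast
  have inj: "inj_on (\<lambda>C. indicator C :: (nat \<times> nat) \<Rightarrow> bit) T'"
    using inj_indicator_bit by (rule inj_on_subset) simp
  have fT': "finite T'" using T' finite_checks[of m] by (auto intro: finite_subset)
  have "(\<Sum>C\<in>T'. (u \<circ> indicator) C * indicator C p) = (0::bit)" for p
  proof -
    have "(\<Sum>v\<in>T. u v * v p) = 0" using T(3) f2_sum_apply[OF T(1), of u "\<lambda>v. v" p] by simp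
    then show ?thesis unfolding T'(2) sum.reindex[OF inj] by (simp add: comp_def)
  qed
  then have "\<forall>C\<in>T'. (u \<circ> indicator) C = 0" by (rule tri_indep[OF tri_checks T'(1)])
  then show False using T(4) T'(2) by auto
qed

lemma part_dim:
  assumes m2: "m \<ge> 2"
  shows "vector_space.dim f2scale (uRM m) = m + 1"
proof -
  interpret V: vector_space f2scale by (rule f2_module)
  define CC where "CC = checks m"
  define Gr where "Gr = grid m"
  define Lead where "Lead = Max ` CC"
  define Free where "Free = Gr - Lead"
  have tri: "tri CC" unfolding CC_def by (rule tri_checks)
  have finG: "finite Gr" unfolding Gr_def grid_def by simp
  have LG: "Lead \<subseteq> Gr"
  proof
    fix p assume "p \<in> Lead"
    then obtain C where C: "C \<in> CC" "p = Max C" unfolding Lead_def by auto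
    have "finite C" "C \<noteq> {}" "C \<subseteq> Gr" using checks_prop[of C m] C(1) unfolding CC_def Gr_def by auto
    then show "p \<in> Gr" using C(2) Max_in by blast
  qed
  have cL: "card Lead = 2 ^ m - m - 1"
    unfolding Lead_def CC_def using card_image[OF inj_checks[of m]] card_checks[OF m2] by simp
  have cF: "card Free = m + 1"
  proof -
    have "card Free = card Gr - card Lead" unfolding Free_def using LG finG
      by (simp add: card_Diff_subset finite_subset)
    moreover have "Suc m \<le> 2 ^ m" by (rule Suc_leI) (rule less_exp)
    ultimately show ?thesis using cL card_grid[of m] unfolding Gr_def by simp
  qed
  have finF: "finite Free" unfolding Free_def using finG by simp
  define e where "e q = (\<lambda>p. if p = q then 1 else 0 :: bit)" for q :: "nat \<times> nat"
  have "\<forall>q. \<exists>z. (\<forall>p. p \<notin> Lead \<longrightarrow> z p = 0) \<and> (\<forall>C\<in>CC. (\<Sum>p\<in>C. z p) = (\<Sum>p\<in>C. e q p))"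
    using tri_solve[OF tri] unfolding Lead_def by blast
  then obtain Z where Z: "\<And>q p. p \<notin> Lead \<Longrightarrow> Z q p = 0"
      "\<And>q C. C \<in> CC \<Longrightarrow> (\<Sum>p\<in>C. Z q p) = (\<Sum>p\<in>C. e q p)"
    using choice[of "\<lambda>q z. (\<forall>p. p \<notin> Lead \<longrightarrow> z p = 0) \<and> (\<forall>C\<in>CC. (\<Sum>p\<in>C. z p) = (\<Sum>p\<in>C. e q p))"]
    by blast
  define b where "b q = (\<lambda>p. e q p + Z q p)" for q
  have finC: "finite C" if "C \<in> CC" for C using checks_prop[of C m] that unfolding CC_def by auto
  have bsum: "(\<Sum>p\<in>C. b q p) = 0" if "C \<in> CC" for C q
  proof -
    have "(\<Sum>p\<in>C. b q p) = (\<Sum>p\<in>C. e q p) + (\<Sum>p\<in>C. Z q p)"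
      unfolding b_def by (rule sum.distrib)
    then show ?thesis using Z(2)[OF that, of q] by (simp add: bit_add_self)
  qed
  have bout: "b q p = 0" if "q \<in> Free" "p \<notin> Gr" for q p
  proof -
    have "p \<noteq> q" using that unfolding Free_def by auto
    moreover have "p \<notin> Lead" using that LG by auto
    ultimately show ?thesis unfolding b_def e_def using Z(1) by simp
  qed
  have bfree: "b q q' = (if q' = q then 1 else 0)" if "q' \<in> Free" for q q'
  proof -
    have "q' \<notin> Lead" using that unfolding Free_def by auto
    then show ?thesis unfolding b_def e_def using Z(1) by simp
  qed
  have bU: "b q \<in> uRM m" if "q \<in> Free" for q
    unfolding uRM_def ambient_def using bout[OF that] bsum
    unfolding Gr_def CC_def by auto
  define BB where "BB = b ` Free"
  have injb: "inj_on b Free"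
  proof (rule inj_onI)
    fix q q' assume "q \<in> Free" "q' \<in> Free" "b q = b q'"
    then have "b q q = b q' q" by simp
    then show "q = q'" using bfree[OF \<open>q \<in> Free\<close>, of q] bfree[OF \<open>q \<in> Free\<close>, of q'] by (auto split: if_splits)
  qed
  have cB: "card BB = m + 1" unfolding BB_def using card_image[OF injb] cF by simp
  have BU: "BB \<subseteq> uRM m" unfolding BB_def using bU by auto
  have indB: "\<not> V.dependent BB"
  proof
    assume "V.dependent BB"
    then obtain T u where T: "finite T" "T \<subseteq> BB"
        "(\<Sum>v\<in>T. f2scale (u v) v) = 0" "\<exists>v\<in>T. u v \<noteq> 0"
      unfolding V.dependent_explicit by blast
    obtain v0 where v0: "v0 \<in> T" "u v0 \<noteq> 0" using T(4) by blast
    obtain q0 where q0: "q0 \<in> Free" "v0 = b q0" using v0(1) T(2) unfolding BB_def by auto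
    have "(\<Sum>v\<in>T. u v * v q0) = 0" using T(3) f2_sum_apply[OF T(1), of u "\<lambda>v. v" q0] by simp
    moreover have "(\<Sum>v\<in>T. u v * v q0) = (\<Sum>v\<in>T. if v = v0 then u v0 else 0)"
    proof (rule sum.cong)
      fix v assume "v \<in> T"
      then obtain q where q: "q \<in> Free" "v = b q" using T(2) unfolding BB_def by auto
      show "u v * v q0 = (if v = v0 then u v0 else 0)"
      proof (cases "q = q0")
        case True then show ?thesis using q q0 bfree[OF q0(1), of q0] by simp
      next
        case False
        have "v q0 = 0" using q bfree[OF q0(1), of q] False by simp
        moreover have "v \<noteq> v0" using q0 bfree[OF q0(1), of q0] \<open>v q0 = 0\<close> by auto
        ultimately show ?thesis by simp
      qed
    qed simp
    moreover have "(\<Sum>v\<in>T. if v = v0 then u v0 else 0) = u v0" using T(1) v0(1) by simp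
    ultimately show False using v0(2) by simp
  qed
  have spanU: "uRM m \<subseteq> V.span BB"
  proof
    fix x assume x: "x \<in> uRM m"
    then have "\<forall>p. p \<notin> grid m \<longrightarrow> x p = 0" unfolding uRM_def ambient_def by blast
    then have xout: "x p = 0" if "p \<notin> Gr" for p using that unfolding Gr_def by blast
    have xsum: "(\<Sum>p\<in>C. x p) = 0" if "C \<in> CC" for C using x that unfolding uRM_def CC_def by auto
    define y where "y = (\<Sum>q\<in>Free. f2scale (x q) (b q))"
    have yspan: "y \<in> V.span BB" unfolding y_def BB_def
      by (intro V.span_sum V.span_scale V.span_base) auto
    have yp: "y p = (\<Sum>q\<in>Free. x q * b q p)" for p
      unfolding y_def by (rule f2_sum_apply[OF finF])
    define d where "d p = x p + y p" for p
    have d0: "d p = 0" if "p \<notin> Max ` CC" for p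
    proof (cases "p \<in> Gr")
      case False
      then show ?thesis unfolding d_def yp using xout[OF False] bout[OF _ False] by simp
    next
      case True
      then have pF: "p \<in> Free" using that unfolding Free_def Lead_def by auto
      have "y p = (\<Sum>q\<in>Free. if q = p then x p else 0)"
        unfolding yp by (rule sum.cong) (auto simp: bfree[OF pF])
      also have "\<dots> = x p" using pF finF by simp
      finally show ?thesis unfolding d_def by (simp add: bit_add_self)
    qed
    have dsum: "(\<Sum>p\<in>C. d p) = 0" if "C \<in> CC" for C
    proof -
      have "(\<Sum>p\<in>C. y p) = (\<Sum>q\<in>Free. x q * (\<Sum>p\<in>C. b q p))"
        unfolding yp by (subst sum.swap) (simp only: sum_distrib_left)
      also have "\<dots> = 0" using bsum[OF that] by simp
      finally show ?thesis unfolding d_def sum.distrib using xsum[OF that] by simp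
    qed
    have "x = y"
    proof
      fix p
      have "d p = 0" by (rule tri_unique[OF tri d0 dsum])
      then show "x p = y p" unfolding d_def by (rule bit_eq_of_add)
    qed
    then show "x \<in> V.span BB" using yspan by simp
  qed
  show ?thesis by (rule V.dim_unique[OF BU spanU indB cB])
qed


theorem lemma1:
  fixes m :: nat
  assumes "m \<ge> 2"
  shows "\<not> module.dependent f2scale ((\<lambda>C. indicator C :: (nat \<times> nat) \<Rightarrow> bit) ` checks m)
     \<and> card (checks m) = 2 ^ m - m - 1
     \<and> card (grid m) = 2 ^ m
     \<and> vector_space.dim f2scale (uRM m) = m + 1"
  using part_indep[of m] card_checks[OF assms] card_grid[of m] part_dim[OF assms] by blast

end
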